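(* Let $r\ge1$ and let $P:\{0,1\}^r\to\{0,1\}$ be a predicate with an affine projection to AND. Then there is a constant $c_r>0$ such that for every $\varepsilon\in[0,1)$ and every $k\ge 4r+2$, there exists an instance of CSP$(P)$ on $k$ Boolean variables for which every $(1\pm\varepsilon)$-sparsifier uses at least $c_r k^2$ constraints.
   Context: A predicate $P:\{0,1\}^r\to\{0,1\}$ has an affine projection to AND if there exists $\pi:[r]\to\{0,1,x,\neg x,y,\neg y\}$ such that $\mathrm{AND}(x,y)=P(\pi(1),\dots,\pi(r))$ for all $x,y\in\{0,1\}$. An instance of CSP$(P)$ on Boolean variables $x_1,\dots,x_k$ is a list of constraints $C_j=P(x_{j,1},\dots,x_{j,r})$, $j\in[m]$; its value on $x\in\{0,1\}^k$ is $\sum_jC_j(x)$. A $(1\pm\varepsilon)$-sparsifier is a subset $T\subseteq[m]$ with nonnegative weights $(w_j)_{j\in T}$ such that for every $x\in\{0,1\}^k$, $(1-\varepsilon)\sum_{j=1}^mC_j(x)\le\sum_{j\in T}w_jC_j(x)\le(1+\varepsilon)\sum_{j=1}^mC_j(x)$. *)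

theory Defs
  imports Complex_Main
begin

datatype proj_lit = PZero | POne | PX | PNotX | PY | PNotY

fun eval_proj_lit :: "proj_lit \<Rightarrow> bool \<Rightarrow> bool \<Rightarrow> bool" where
  "eval_proj_lit PZero x y = False"
| "eval_proj_lit POne x y = True"
| "eval_proj_lit PX x y = x"
| "eval_proj_lit PNotX x y = (\<not> x)"
| "eval_proj_lit PY x y = y"
| "eval_proj_lit PNotY x y = (\<not> y)"

text \<open>A predicate of arity r is a function on Boolean lists (only lists of length r matter).
  It has an affine projection to AND if some pi : [r] -> {0,1,x,~x,y,~y} gives
  AND(x,y) = P(pi(1),...,pi(r)).\<close>
definition has_affine_proj_AND :: "nat \<Rightarrow> (bool list \<Rightarrow> bool) \<Rightarrow> bool" where
  "has_affine_proj_AND r P \<longleftrightarrow>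
     (\<exists>\<pi> :: nat \<Rightarrow> proj_lit. \<forall>x y. (x \<and> y) = P (map (\<lambda>i. eval_proj_lit (\<pi> i) x y) [0..<r]))"

definition csp_instance :: "nat \<Rightarrow> nat \<Rightarrow> nat list list \<Rightarrow> bool" where
  "csp_instance r k cs \<longleftrightarrow> (\<forall>c \<in> set cs. length c = r \<and> (\<forall>v \<in> set c. v < k))"

definition constr_val :: "(bool list \<Rightarrow> bool) \<Rightarrow> nat list list \<Rightarrow> nat \<Rightarrow> (nat \<Rightarrow> bool) \<Rightarrow> real" where
  "constr_val P cs j a = (if P (map a (cs ! j)) then 1 else 0)"

definition is_sparsifier ::
  "(bool list \<Rightarrow> bool) \<Rightarrow> nat list list \<Rightarrow> real \<Rightarrow> nat set \<Rightarrow> (nat \<Rightarrow> real) \<Rightarrow> bool" where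
  "is_sparsifier P cs \<epsilon> T w \<longleftrightarrow>
     T \<subseteq> {..<length cs} \<and> (\<forall>j\<in>T. w j \<ge> 0) \<and>
     (\<forall>a :: nat \<Rightarrow> bool.
        (1 - \<epsilon>) * (\<Sum>j<length cs. constr_val P cs j a) \<le> (\<Sum>j\<in>T. w j * constr_val P cs j a) \<and>
        (\<Sum>j\<in>T. w j * constr_val P cs j a) \<le> (1 + \<epsilon>) * (\<Sum>j<length cs. constr_val P cs j a))"

end

theory Submission
  imports Defs
begin

definition var_of :: "nat \<Rightarrow> nat \<Rightarrow> nat \<Rightarrow> proj_lit \<Rightarrow> nat" where
  "var_of n u v l = (case l of PZero \<Rightarrow> 0 | POne \<Rightarrow> 1 | PX \<Rightarrow> 2+u | PNotX \<Rightarrow> 2+n+u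
      | PY \<Rightarrow> 2+2*n+v | PNotY \<Rightarrow> 2+3*n+v)"

definition asg :: "nat \<Rightarrow> nat \<Rightarrow> nat \<Rightarrow> nat \<Rightarrow> bool" where
  "asg n u v t = (if t = 0 then False else if t = 1 then True else if t < 2+n then t = 2+u
     else if t < 2+2*n then t \<noteq> 2+n+u else if t < 2+3*n then t = 2+2*n+v else t \<noteq> 2+3*n+v)"

lemma asg_var:
  assumes "u < n" "v < n" "u' < n" "v' < n"
  shows "asg n u v (var_of n u' v' l) = eval_proj_lit l (u' = u) (v' = v)"
  using assms by (cases l) (auto simp: asg_def var_of_def)

definition cons_of :: "(nat \<Rightarrow> proj_lit) \<Rightarrow> nat \<Rightarrow> nat \<Rightarrow> nat \<Rightarrow> nat \<Rightarrow> nat list" where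
  "cons_of \<pi> r n u v = map (\<lambda>i. var_of n u v (\<pi> i)) [0..<r]"

definition inst :: "(nat \<Rightarrow> proj_lit) \<Rightarrow> nat \<Rightarrow> nat \<Rightarrow> nat list list" where
  "inst \<pi> r n = map (\<lambda>j. cons_of \<pi> r n (j div n) (j mod n)) [0..<n*n]"

lemma inst_csp:
  assumes "4*n + 2 \<le> k"
  shows "csp_instance r k (inst \<pi> r n)"
  unfolding csp_instance_def inst_def cons_of_def
proof (clarsimp)
  fix j i assume j: "j < n*n" and "i < r"
  have a: "j div n < n" using j by (simp add: less_mult_imp_div_less)
  have b: "j mod n < n" using j by (cases "n=0") auto
  show "var_of n (j div n) (j mod n) (\<pi> i) < k"
  proof -
    have "2 + 3*n + j mod n < k" "2 + 2*n + j mod n < k" "2 + n + j div n < k" "2 + j div n < k"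
      using a b assms by linarith+
    thus ?thesis by (cases "\<pi> i") (simp_all add: var_of_def)
  qed
qed

lemma key:
  assumes pi: "\<forall>x y. (x \<and> y) = P (map (\<lambda>i. eval_proj_lit (\<pi> i) x y) [0..<r])"
    and j: "j < n*n" and j0: "j0 < n*n"
  shows "constr_val P (inst \<pi> r n) j (asg n (j0 div n) (j0 mod n)) = (if j = j0 then 1 else 0)"
proof -
  have n: "n > 0" using j by (cases "n=0") auto
  have b: "j div n < n" "j mod n < n" "j0 div n < n" "j0 mod n < n"
    using j j0 n by (auto simp: less_mult_imp_div_less)
  have "map (asg n (j0 div n) (j0 mod n)) (inst \<pi> r n ! j)
      = map (\<lambda>i. eval_proj_lit (\<pi> i) (j div n = j0 div n) (j mod n = j0 mod n)) [0..<r]"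
    using j b by (simp add: inst_def cons_of_def asg_var)
  hence "P (map (asg n (j0 div n) (j0 mod n)) (inst \<pi> r n ! j))
      = (j div n = j0 div n \<and> j mod n = j0 mod n)"
    using pi[rule_format, of "j div n = j0 div n" "j mod n = j0 mod n"] by simp
  also have "\<dots> = (j = j0)"
  proof
    assume h: "j div n = j0 div n \<and> j mod n = j0 mod n"
    have "j = j div n * n + j mod n" by simp
    also have "\<dots> = j0 div n * n + j0 mod n" using h by simp
    also have "\<dots> = j0" by simp
    finally show "j = j0" .
  qed simp
  finally show ?thesis by (simp add: constr_val_def)
qed

theorem lemma7p3:
  fixes r :: nat and P :: "bool list \<Rightarrow> bool"
  assumes "r \<ge> 1" and "has_affine_proj_AND r P"
  shows "\<exists>c::real. c > 0 \<and>
    (\<forall>\<epsilon>::real. \<forall>k::nat. 0 \<le> \<epsilon> \<longrightarrow> \<epsilon> < 1 \<longrightarrow> k \<ge> 4 * r + 2 \<longrightarrow>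
      (\<exists>cs. csp_instance r k cs \<and>
        (\<forall>T w. is_sparsifier P cs \<epsilon> T w \<longrightarrow> real (card T) \<ge> c * (real k)^2)))"
proof -
  obtain \<pi> where pi: "\<forall>x y. (x \<and> y) = P (map (\<lambda>i. eval_proj_lit (\<pi> i) x y) [0..<r])"
    using assms(2) unfolding has_affine_proj_AND_def by blast
  show ?thesis
  proof (intro exI[of _ "1/576"] conjI allI impI)
    fix \<epsilon> :: real and k :: nat
    assume e0: "0 \<le> \<epsilon>" and e1: "\<epsilon> < 1" and k: "4*r+2 \<le> k"
    define n where "n = (k - 2) div 4"
    have nk: "4*n + 2 \<le> k" unfolding n_def using k by linarith
    have k6: "k \<ge> 6" using k assms(1) by linarith
    have n24: "real k \<le> 24 * real n"
    proof -
      have "k - 2 < 4*n + 4" unfolding n_def by linarith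
      hence "k \<le> 24*n" using k6 by linarith
      hence "real k \<le> real (24*n)" by (simp only: of_nat_le_iff)
      thus ?thesis by simp
    qed
    show "\<exists>cs. csp_instance r k cs \<and>
        (\<forall>T w. is_sparsifier P cs \<epsilon> T w \<longrightarrow> real (card T) \<ge> 1/576 * (real k)^2)"
    proof (intro exI[of _ "inst \<pi> r n"] conjI allI impI)
      show "csp_instance r k (inst \<pi> r n)" using inst_csp[OF nk] .
      fix T w assume sp: "is_sparsifier P (inst \<pi> r n) \<epsilon> T w"
      have len: "length (inst \<pi> r n) = n*n" by (simp add: inst_def)
      have TT: "T \<subseteq> {..<n*n}" using sp len by (simp add: is_sparsifier_def)
      have sub: "{..<n*n} \<subseteq> T"
      proof
        fix j0 assume "j0 \<in> {..<n*n}"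
        hence j0: "j0 < n*n" by simp
        let ?a = "asg n (j0 div n) (j0 mod n)"
        have ineq: "(1 - \<epsilon>) * (\<Sum>j<n*n. constr_val P (inst \<pi> r n) j ?a)
             \<le> (\<Sum>j\<in>T. w j * constr_val P (inst \<pi> r n) j ?a)"
          using sp unfolding is_sparsifier_def len by blast
        have s1: "(\<Sum>j<n*n. constr_val P (inst \<pi> r n) j ?a) = (\<Sum>j<n*n. if j = j0 then 1 else 0)"
          by (rule sum.cong) (auto simp: key[OF pi _ j0])
        have s2: "(\<Sum>j\<in>T. w j * constr_val P (inst \<pi> r n) j ?a) = (\<Sum>j\<in>T. if j = j0 then w j else 0)"
          by (rule sum.cong) (use TT in \<open>auto simp: key[OF pi _ j0]\<close>)
        show "j0 \<in> T"
        proof (rule ccontr)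
          assume "j0 \<notin> T"
          hence "(\<Sum>j\<in>T. w j * constr_val P (inst \<pi> r n) j ?a) = 0" unfolding s2
            by (intro sum.neutral) auto
          moreover have "(\<Sum>j<n*n. constr_val P (inst \<pi> r n) j ?a) = 1" using s1 j0 by simp
          ultimately show False using ineq e1 by simp
        qed
      qed
      hence "T = {..<n*n}" using TT by auto
      hence cT: "real (card T) = real n * real n" by simp
      have "(real k)^2 \<le> (24 * real n)^2"
        using n24 by (intro power_mono) auto
      thus "real (card T) \<ge> 1/576 * (real k)^2" unfolding cT by (simp add: power2_eq_square)
    qed
  qed (simp)
qed

end
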